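(* For $n\ge3$: $\mathrm{St}(\mathfrak a_0^\circ(n))=\{I,X\}^{\otimes n}\cup\{Y,Z\}^{\otimes n}$; $\mathrm{St}(\mathfrak a_2^\circ(n))=\{P_I,P_{XY},P_{YX},P_Z\}$ for $n$ even and $\{P_I,P_Z\}$ for $n$ odd; $\mathrm{St}(\mathfrak a_3^\circ(n))=\mathrm{St}(\mathfrak a_6^\circ(n))=\{P_I,P_X,P_{YZ},P_{ZY}\}$ for $n$ even and $\{P_I,P_X\}$ for $n$ odd; $\mathrm{St}(\mathfrak a_4^\circ(n))=\mathrm{St}(\mathfrak a_7^\circ(n))=\{P_I,P_X,P_Y,P_Z\}$; $\mathrm{St}(\mathfrak a_5^\circ(n))=\mathrm{St}(\mathfrak a_{10}^\circ(n))=\{P_I,P_{XYZ},P_{YZX},P_{ZXY}\}$ if $n\equiv0\pmod3$ and $\{P_I\}$ if $n\equiv\pm1\pmod 3$; $\mathrm{St}(\mathfrak a_8^\circ(n))=\{P_I,P_Y\}$; $\mathrm{St}(\mathfrak a_{13}^\circ(n))=\mathrm{St}(\mathfrak a_{20}^\circ(n))=\{P_I,P_X\}$; $\mathrm{St}(\mathfrak a_{14}^\circ(n))=\{P_I,P_Z\}$; $\mathrm{St}(\mathfrak b_0^\circ(n))=\mathrm{St}(\mathfrak b_1^\circ(n))=\{I,X\}^{\otimes n}$; $\mathrm{St}(\mathfrak a_k^\circ(n))=\mathrm{St}(\mathfrak b_l^\circ(n))=\{P_I\}$ for $k\in\{9,11,12,15,16,17,18,19,21,22\}$ and $l\in\{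2,3,4\}$.
   Context: Pauli matrices $I,X,Y,Z$; $\mathcal P_n$ is the set of length-$n$ Pauli strings. $A_iB_j$ denotes the string with $A$ at position $i$, $B$ at $j$, $I$ elsewhere. For a word $w$ over $\{I,X,Y,Z\}$, $P_w\in\mathcal P_n$ is the repetition $www\cdots$ truncated to length $n$ (e.g. $P_I=I^{\otimes n}$, $P_X=X^{\otimes n}$, $P_{XYZ}=XYZXYZ\cdots$). The stabilizer $\mathrm{St}(\mathfrak s)$ is the set of all $P\in\mathcal P_n$ commuting with every element of $\mathfrak s$. For a set $S$ of Pauli strings, $\mathrm{Lie}\langle S\rangle$ is the smallest real Lie subalgebra of $\mathfrak u(2^n)$ containing $\{iP:P\in S\}$. For a set $G$ of two-qubit strings, $G^\circ(n)=\mathrm{Lie}\langle A_jB_{j+1}\ (1\le j\le n-1),\ A_nB_1: AB\in G\rangle$. Generating sets: $\mathfrak a_0=\{XX\}$, $\mathfrak a_2=\{XY,YX\}$, $\mathfrak a_3=\{XX,YZ\}$, $\mathfrak a_4=\{XX,YY\}$, $\mathfrak a_5=\{XY,YZ\}$, $\mathfrak a_6=\{XX,YZ,ZY\}$, $\mathfrak a_7=\{XX,YY,ZZ\}$, $\mathfrak a_8=\{XX,XZ\}$, $\mathfrak a_9=\{XY,XZ\}$, $\mathfrak a_{10}=\{XY,YZ,ZX\}$, $\mathfrak a_{11}=\{XY,YX,YZ\}$, $\mathfrak a_{12}=\{XX,XY,YZ\}$, $\mathfrak a_{13}=\{XX,YY,YZ\}$, $\mathfrak a_{14}=\{XX,YY,XY\}$,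 $\mathfrak a_{15}=\{XX,XY,XZ\}$, $\mathfrak a_{16}=\{XY,YX,YZ,ZY\}$, $\mathfrak a_{17}=\{XX,XY,ZX\}$, $\mathfrak a_{18}=\{XX,XZ,YY,ZY\}$, $\mathfrak a_{19}=\{XX,XY,ZX,YZ\}$, $\mathfrak a_{20}=\{XX,YY,ZZ,ZY\}$, $\mathfrak a_{21}=\{XX,YY,XY,ZX\}$, $\mathfrak a_{22}=\{XX,XY,XZ,YX\}$, $\mathfrak b_0=\{XI,IX\}$, $\mathfrak b_1=\{XX,XI,IX\}$, $\mathfrak b_2=\{XY,XI,IX\}$, $\mathfrak b_3=\{XI,YI,IX,IY\}$, $\mathfrak b_4=\{XX,XY,XI,IX\}$. *)

theory Defs
  imports "Jordan_Normal_Form.Matrix"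
begin

datatype pauli = PI | PX | PY | PZ

definition pauli_mat :: "pauli \<Rightarrow> complex mat" where
  "pauli_mat p = (case p of
      PI \<Rightarrow> mat_of_rows_list 2 [[1, 0], [0, 1]]
    | PX \<Rightarrow> mat_of_rows_list 2 [[0, 1], [1, 0]]
    | PY \<Rightarrow> mat_of_rows_list 2 [[0, - \<i>], [\<i>, 0]]
    | PZ \<Rightarrow> mat_of_rows_list 2 [[1, 0], [0, -1]])"

definition kron :: "complex mat \<Rightarrow> complex mat \<Rightarrow> complex mat" where
  "kron A B = mat (dim_row A * dim_row B) (dim_col A * dim_col B)
     (\<lambda>(i, j). A $$ (i div dim_row B, j div dim_col B) * B $$ (i mod dim_row B, j mod dim_col B))"

definition pstring_mat :: "pauli list \<Rightarrow> complex mat" where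
  "pstring_mat w = foldr kron (map pauli_mat w) (1\<^sub>m 1)"

definition pauli_strings :: "nat \<Rightarrow> pauli list set" where
  "pauli_strings n = {w. length w = n}"

inductive_set lie_gen :: "complex mat set \<Rightarrow> complex mat set" for S where
  gen: "A \<in> S \<Longrightarrow> A \<in> lie_gen S"
| add: "A \<in> lie_gen S \<Longrightarrow> B \<in> lie_gen S \<Longrightarrow> A + B \<in> lie_gen S"
| smult: "A \<in> lie_gen S \<Longrightarrow> complex_of_real c \<cdot>\<^sub>m A \<in> lie_gen S"
| bracket: "A \<in> lie_gen S \<Longrightarrow> B \<in> lie_gen S \<Longrightarrow> A * B - B * A \<in> lie_gen S"

definition Lie :: "pauli list set \<Rightarrow> complex mat set" where
  "Lie S = lie_gen ((\<lambda>P. \<i> \<cdot>\<^sub>m pstring_mat P) ` S)"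

definition St :: "nat \<Rightarrow> complex mat set \<Rightarrow> pauli list set" where
  "St n \<s> = {P \<in> pauli_strings n. \<forall>A \<in> \<s>. pstring_mat P * A = A * pstring_mat P}"

text \<open>A_i B_j (0-indexed positions i, j, i \<noteq> j) in a string of length n.\<close>
definition two_site :: "nat \<Rightarrow> pauli \<Rightarrow> nat \<Rightarrow> pauli \<Rightarrow> nat \<Rightarrow> pauli list" where
  "two_site n A i B j = (replicate n PI)[i := A, j := B]"

definition circ :: "(pauli \<times> pauli) set \<Rightarrow> nat \<Rightarrow> complex mat set" where
  "circ G n = Lie ({two_site n A j B (j + 1) | A B j. (A, B) \<in> G \<and> j < n - 1}
                   \<union> {two_site n A (n - 1) B 0 | A B. (A, B) \<in> G})"

definition Prep :: "nat \<Rightarrow> pauli list \<Rightarrow> pauli list" where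
  "Prep n w = map (\<lambda>k. w ! (k mod length w)) [0..<n]"

definition tensor_pow :: "pauli set \<Rightarrow> nat \<Rightarrow> pauli list set" where
  "tensor_pow T n = {w. length w = n \<and> set w \<subseteq> T}"

definition "a0 = {(PX, PX)}"
definition "a2 = {(PX, PY), (PY, PX)}"
definition "a3 = {(PX, PX), (PY, PZ)}"
definition "a4 = {(PX, PX), (PY, PY)}"
definition "a5 = {(PX, PY), (PY, PZ)}"
definition "a6 = {(PX, PX), (PY, PZ), (PZ, PY)}"
definition "a7 = {(PX, PX), (PY, PY), (PZ, PZ)}"
definition "a8 = {(PX, PX), (PX, PZ)}"
definition "a9 = {(PX, PY), (PX, PZ)}"
definition "a10 = {(PX, PY), (PY, PZ), (PZ, PX)}"
definition "a11 = {(PX, PY), (PY, PX), (PY, PZ)}"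
definition "a12 = {(PX, PX), (PX, PY), (PY, PZ)}"
definition "a13 = {(PX, PX), (PY, PY), (PY, PZ)}"
definition "a14 = {(PX, PX), (PY, PY), (PX, PY)}"
definition "a15 = {(PX, PX), (PX, PY), (PX, PZ)}"
definition "a16 = {(PX, PY), (PY, PX), (PY, PZ), (PZ, PY)}"
definition "a17 = {(PX, PX), (PX, PY), (PZ, PX)}"
definition "a18 = {(PX, PX), (PX, PZ), (PY, PY), (PZ, PY)}"
definition "a19 = {(PX, PX), (PX, PY), (PZ, PX), (PY, PZ)}"
definition "a20 = {(PX, PX), (PY, PY), (PZ, PZ), (PZ, PY)}"
definition "a21 = {(PX, PX), (PY, PY), (PX, PY), (PZ, PX)}"
definition "a22 = {(PX, PX), (PX, PY), (PX, PZ), (PY, PX)}"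
definition "b0 = {(PX, PI), (PI, PX)}"
definition "b1 = {(PX, PX), (PX, PI), (PI, PX)}"
definition "b2 = {(PX, PY), (PX, PI), (PI, PX)}"
definition "b3 = {(PX, PI), (PY, PI), (PI, PX), (PI, PY)}"
definition "b4 = {(PX, PX), (PX, PY), (PX, PI), (PI, PX)}"

end

theory Submission
  imports Defs
begin


lemma sum_divmod:
  fixes g :: "nat \<Rightarrow> nat \<Rightarrow> 'a::comm_monoid_add"
  assumes "b > 0"
  shows "(\<Sum>k<a*b. g (k div b) (k mod b)) = (\<Sum>k1<a. \<Sum>k2<b. g k1 k2)"
proof -
  have "(\<Sum>k<a*b. g (k div b) (k mod b)) = (\<Sum>m<a. \<Sum>k\<in>{m*b..<m*b+b}. g (k div b) (k mod b))"
    by (rule sum.nat_group[symmetric])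
  also have "\<dots> = (\<Sum>m<a. \<Sum>k2<b. g m k2)"
  proof (rule sum.cong[OF refl])
    fix m
    have "(\<Sum>k\<in>{m*b..<m*b+b}. g (k div b) (k mod b)) = (\<Sum>k\<in>{0..<b}. g ((m*b+k) div b) ((m*b+k) mod b))"
      by (subst sum.atLeastLessThan_shift_0) (simp add: comp_def)
    also have "\<dots> = (\<Sum>k2<b. g m k2)"
      using assms by (intro sum.cong) auto
    finally show "(\<Sum>k\<in>{m*b..<m*b+b}. g (k div b) (k mod b)) = (\<Sum>k2<b. g m k2)" .
  qed
  finally show ?thesis .
qed

lemma kron_dims[simp]: "dim_row (kron A B) = dim_row A * dim_row B" "dim_col (kron A B) = dim_col A * dim_col B"
  by (simp_all add: kron_def)

lemma kron_index: "i < dim_row A * dim_row B \<Longrightarrow> j < dim_col A * dim_col B \<Longrightarrow>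
  kron A B $$ (i,j) = A $$ (i div dim_row B, j div dim_col B) * B $$ (i mod dim_row B, j mod dim_col B)"
  by (simp add: kron_def)

lemma kron_mult:
  assumes A: "A \<in> carrier_mat a a'" and B: "B \<in> carrier_mat b b'" and C: "C \<in> carrier_mat a' a''"
    and D: "D \<in> carrier_mat b' b''" and pos: "b > 0" "b' > 0" "b'' > 0"
  shows "kron A B * kron C D = kron (A * C) (B * D)"
proof (rule eq_matI)
  show "dim_row (kron A B * kron C D) = dim_row (kron (A * C) (B * D))" using A B by simp
  show "dim_col (kron A B * kron C D) = dim_col (kron (A * C) (B * D))" using C D by simp
  fix i j assume i: "i < dim_row (kron (A * C) (B * D))" and j: "j < dim_col (kron (A * C) (B * D))"
  have i': "i < a * b" and j': "j < a'' * b''" using i j A B C D by auto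
  have id: "i div b < a" "i mod b < b" "j div b'' < a''" "j mod b'' < b''"
    using i' j' pos by (auto simp: less_mult_imp_div_less mult.commute)
  have "(kron A B * kron C D) $$ (i,j) = (\<Sum>k<a'*b'. kron A B $$ (i,k) * kron C D $$ (k,j))"
    using A B C D i' j' by (simp add: scalar_prod_def lessThan_atLeast0)
  also have "\<dots> = (\<Sum>k<a'*b'. (A $$ (i div b, k div b') * B $$ (i mod b, k mod b')) * (C $$ (k div b', j div b'') * D $$ (k mod b', j mod b'')))"
    using A B C D i' j' by (intro sum.cong) (auto simp: kron_def)
  also have "\<dots> = (\<Sum>k1<a'. \<Sum>k2<b'. (A $$ (i div b, k1) * B $$ (i mod b, k2)) * (C $$ (k1, j div b'') * D $$ (k2, j mod b'')))"
    using sum_divmod[OF pos(2), of "\<lambda>k1 k2. (A $$ (i div b, k1) * B $$ (i mod b, k2)) * (C $$ (k1, j div b'') * D $$ (k2, j mod b''))"] by simp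
  also have "\<dots> = (\<Sum>k1<a'. A $$ (i div b, k1) * C $$ (k1, j div b'')) * (\<Sum>k2<b'. B $$ (i mod b, k2) * D $$ (k2, j mod b''))"
    by (simp add: sum_product mult_ac)
  also have "\<dots> = kron (A * C) (B * D) $$ (i,j)"
    using A B C D i' j' id by (simp add: kron_def scalar_prod_def lessThan_atLeast0)
  finally show "(kron A B * kron C D) $$ (i,j) = kron (A * C) (B * D) $$ (i,j)" .
qed

lemma kron_smult1: "kron (c \<cdot>\<^sub>m A) B = c \<cdot>\<^sub>m kron A B"
  by (rule eq_matI) (auto simp: kron_def less_mult_imp_div_less)

lemma kron_smult2: "kron A (c \<cdot>\<^sub>m B) = c \<cdot>\<^sub>m kron A B"
proof (rule eq_matI)
  fix i j assume i: "i < dim_row (c \<cdot>\<^sub>m kron A B)" and j: "j < dim_col (c \<cdot>\<^sub>m kron A B)"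
  then have "dim_row B > 0" "dim_col B > 0" by (auto intro: gr0I)
  then show "kron A (c \<cdot>\<^sub>m B) $$ (i, j) = (c \<cdot>\<^sub>m kron A B) $$ (i, j)"
    using i j by (auto simp: kron_def)
qed auto

lemma kron_one: "b > 0 \<Longrightarrow> kron (1\<^sub>m a) (1\<^sub>m b) = 1\<^sub>m (a*b)"
proof (rule eq_matI)
  fix i j assume "b > 0" "i < dim_row (1\<^sub>m (a * b))" "j < dim_col (1\<^sub>m (a * b))"
  then have "i div b < a" "j div b < a" by (auto simp: less_mult_imp_div_less mult.commute)
  moreover have "(i div b = j div b \<and> i mod b = j mod b) = (i = j)"
    by (metis div_mult_mod_eq)
  ultimately show "kron (1\<^sub>m a) (1\<^sub>m b) $$ (i, j) = 1\<^sub>m (a * b) $$ (i, j)"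
    using \<open>b>0\<close> \<open>i < _\<close> \<open>j < _\<close> by (auto simp: kron_def)
qed auto




fun anti :: "pauli \<Rightarrow> pauli \<Rightarrow> bool" where
  "anti a b = (a \<noteq> PI \<and> b \<noteq> PI \<and> a \<noteq> b)"

lemma pauli_carrier: "pauli_mat p \<in> carrier_mat 2 2"
  by (cases p) (auto simp: pauli_mat_def mat_of_rows_list_def)

lemma mult2_index: "A \<in> carrier_mat 2 2 \<Longrightarrow> B \<in> carrier_mat 2 2 \<Longrightarrow> i < 2 \<Longrightarrow> j < 2 \<Longrightarrow>
  (A * B) $$ (i,j) = A $$ (i,0) * B $$ (0,j) + A $$ (i,1) * B $$ (1,j)"
  by (auto simp: scalar_prod_def numeral_2_eq_2)

lemma two_cases: "(i::nat) < 2 \<Longrightarrow> i = 0 \<or> i = 1" by auto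

definition pent :: "pauli \<Rightarrow> nat \<Rightarrow> nat \<Rightarrow> complex" where
  "pent p i j = (case p of PI \<Rightarrow> [[1, 0], [0, 1]]
    | PX \<Rightarrow> [[0, 1], [1, 0]]
    | PY \<Rightarrow> [[0, - \<i>], [\<i>, 0]]
    | PZ \<Rightarrow> [[1, 0], [0, -1]]) ! i ! j"

lemma pauli_index: "i < 2 \<Longrightarrow> j < 2 \<Longrightarrow> pauli_mat p $$ (i,j) = pent p i j"
  by (cases p) (auto simp: pauli_mat_def mat_of_rows_list_def pent_def)

lemma mult2: "A \<in> carrier_mat 2 2 \<Longrightarrow> B \<in> carrier_mat 2 2 \<Longrightarrow>
  A * B = mat 2 2 (\<lambda>(i,j). A $$ (i,0) * B $$ (0,j) + A $$ (i,1) * B $$ (1,j))"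
  by (rule eq_matI) (auto simp: scalar_prod_def numeral_2_eq_2)

lemma pauli_comm: "pauli_mat p * pauli_mat q = (if anti p q then -1 else 1) \<cdot>\<^sub>m (pauli_mat q * pauli_mat p)"
  unfolding mult2[OF pauli_carrier pauli_carrier]
  by (rule eq_matI) (auto dest!: two_cases simp: pauli_index pent_def split: pauli.splits)

lemma pauli_sq: "pauli_mat p * pauli_mat p = 1\<^sub>m 2"
  unfolding mult2[OF pauli_carrier pauli_carrier]
  by (rule eq_matI) (auto dest!: two_cases simp: pauli_index pent_def split: pauli.splits)




fun acount :: "pauli list \<Rightarrow> pauli list \<Rightarrow> nat" where
  "acount (a#v) (b#w) = (if anti a b then 1 else 0) + acount v w"
| "acount _ _ = 0"

lemma pstring_Nil: "pstring_mat [] = 1\<^sub>m 1" by (simp add: pstring_mat_def)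
lemma pstring_Cons: "pstring_mat (p#w) = kron (pauli_mat p) (pstring_mat w)" by (simp add: pstring_mat_def)

lemma pstring_carrier: "pstring_mat w \<in> carrier_mat (2^length w) (2^length w)"
  by (induction w) (auto simp: pstring_Nil pstring_Cons carrier_matD[OF pauli_carrier] intro!: carrier_matI)

lemma smult_smult_mat: "a \<cdot>\<^sub>m (b \<cdot>\<^sub>m (A :: complex mat)) = (a*b) \<cdot>\<^sub>m A"
  by (rule eq_matI) auto

lemma one_smult_mat': "(1::complex) \<cdot>\<^sub>m A = A"
  by (rule eq_matI) simp_all

lemma pstring_comm: "length v = length w \<Longrightarrow>
  pstring_mat v * pstring_mat w = ((-1)^acount v w) \<cdot>\<^sub>m (pstring_mat w * pstring_mat v)"
proof (induction v arbitrary: w)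
  case Nil
  then show ?case by (simp add: pstring_Nil one_smult_mat')
next
  case (Cons a v)
  then obtain b w' where w: "w = b # w'" and len: "length v = length w'" by (cases w) auto
  let ?m = "2 ^ length v :: nat"
  have cv: "pstring_mat v \<in> carrier_mat ?m ?m" and cw: "pstring_mat w' \<in> carrier_mat ?m ?m"
    using pstring_carrier[of v] pstring_carrier[of w'] len by auto
  have pos: "?m > 0" by simp
  have "pstring_mat (a#v) * pstring_mat w = kron (pauli_mat a * pauli_mat b) (pstring_mat v * pstring_mat w')"
    unfolding w pstring_Cons by (rule kron_mult[OF pauli_carrier cv pauli_carrier cw pos pos pos])
  also have "\<dots> = kron ((if anti a b then -1 else 1) \<cdot>\<^sub>m (pauli_mat b * pauli_mat a)) (((-1)^acount v w') \<cdot>\<^sub>m (pstring_mat w' * pstring_mat v))"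
    by (subst pauli_comm, subst Cons.IH[OF len], rule refl)
  also have "\<dots> = ((-1)^acount (a#v) w) \<cdot>\<^sub>m kron (pauli_mat b * pauli_mat a) (pstring_mat w' * pstring_mat v)"
    by (simp add: kron_smult1 kron_smult2 smult_smult_mat w)
  also have "kron (pauli_mat b * pauli_mat a) (pstring_mat w' * pstring_mat v) = pstring_mat w * pstring_mat (a#v)"
    unfolding w pstring_Cons by (rule kron_mult[OF pauli_carrier cw pauli_carrier cv pos pos pos, symmetric])
  finally show ?case .
qed

lemma pstring_sq: "pstring_mat v * pstring_mat v = 1\<^sub>m (2^length v)"
proof (induction v)
  case Nil
  then show ?case by (simp add: pstring_Nil)
next
  case (Cons a v)
  let ?m = "2 ^ length v :: nat"
  have cv: "pstring_mat v \<in> carrier_mat ?m ?m" using pstring_carrier[of v] by auto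
  have pos: "?m > 0" by simp
  show ?case unfolding pstring_Cons
    by (simp add: kron_mult[OF pauli_carrier cv pauli_carrier cv pos pos pos] pauli_sq Cons.IH kron_one)
qed

definition commutes :: "complex mat \<Rightarrow> complex mat \<Rightarrow> bool" where
  "commutes A B = (A * B = B * A)"

lemma pstring_commutes_iff: "length v = length w \<Longrightarrow> commutes (pstring_mat v) (pstring_mat w) \<longleftrightarrow> even (acount v w)"
proof
  assume len: "length v = length w"
  let ?m = "2 ^ length v :: nat"
  have cv: "pstring_mat v \<in> carrier_mat ?m ?m" and cw: "pstring_mat w \<in> carrier_mat ?m ?m"
    using pstring_carrier[of v] pstring_carrier[of w] len by auto
  assume c: "commutes (pstring_mat v) (pstring_mat w)"
  show "even (acount v w)"
  proof (rule ccontr)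
    assume "odd (acount v w)"
    then have e: "pstring_mat v * pstring_mat w = (-1) \<cdot>\<^sub>m (pstring_mat w * pstring_mat v)"
      using pstring_comm[OF len] by simp
    have z: "pstring_mat w * pstring_mat v = 0\<^sub>m ?m ?m"
    proof (rule eq_matI)
      fix i j assume ij: "i < dim_row (0\<^sub>m ?m ?m :: complex mat)" "j < dim_col (0\<^sub>m ?m ?m :: complex mat)"
      have "(pstring_mat v * pstring_mat w) $$ (i,j) = ((-1) \<cdot>\<^sub>m (pstring_mat w * pstring_mat v)) $$ (i,j)"
        using e by simp
      then have "(pstring_mat w * pstring_mat v) $$ (i,j) = - (pstring_mat w * pstring_mat v) $$ (i,j)"
        using c ij cv cw unfolding commutes_def by simp
      then show "(pstring_mat w * pstring_mat v) $$ (i,j) = 0\<^sub>m ?m ?m $$ (i,j)" using ij by simp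
    qed (use cv cw in auto)
    have "pstring_mat w = (pstring_mat w * pstring_mat v) * pstring_mat v"
      using cv cw pstring_sq[of v] by simp
    also have "\<dots> = 0\<^sub>m ?m ?m" using z cv by simp
    finally have "pstring_mat w * pstring_mat w = 0\<^sub>m ?m ?m" using cw by simp
    then have "(1\<^sub>m ?m :: complex mat) = 0\<^sub>m ?m ?m" using pstring_sq[of w] len by simp
    then have "(1\<^sub>m ?m :: complex mat) $$ (0,0) = 0\<^sub>m ?m ?m $$ (0,0)" by simp
    then show False by simp
  qed
next
  assume len: "length v = length w" and "even (acount v w)"
  then show "commutes (pstring_mat v) (pstring_mat w)"
    using pstring_comm[OF len] unfolding commutes_def by (simp add: one_smult_mat')
qed




lemma lie_commute:
  assumes Q: "Q \<in> carrier_mat N N" and S: "\<forall>A\<in>S. A \<in> carrier_mat N N \<and> commutes Q A"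
  shows "B \<in> lie_gen S \<Longrightarrow> B \<in> carrier_mat N N \<and> commutes Q B"
proof (induction rule: lie_gen.induct)
  case (gen A)
  then show ?case using S by auto
next
  case (add A B)
  then show ?case using Q unfolding commutes_def
    by (auto simp: mult_add_distrib_mat[OF Q] add_mult_distrib_mat[OF _ _ Q])
next
  case (smult A c)
  then show ?case using Q unfolding commutes_def
    by (auto simp: mult_smult_distrib[OF Q] mult_smult_assoc_mat[OF _ Q])
next
  case (bracket A B)
  then have A: "A \<in> carrier_mat N N" and B: "B \<in> carrier_mat N N" and cA: "Q * A = A * Q" and cB: "Q * B = B * Q"
    unfolding commutes_def by auto
  have "Q * (A * B - B * A) = Q * (A * B) - Q * (B * A)"
    using A B Q by (subst mult_minus_distrib_mat[where n=N and nc=N]) auto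
  also have "\<dots> = (A * B) * Q - (B * A) * Q"
  proof -
    have "Q * (A * B) = (A * B) * Q"
    proof -
      have "Q * (A * B) = (Q * A) * B" using assoc_mult_mat[OF Q A B] by simp
      also have "\<dots> = A * (Q * B)" using cA assoc_mult_mat[OF A Q B] by simp
      also have "\<dots> = (A * B) * Q" using cB assoc_mult_mat[OF A B Q] by simp
      finally show ?thesis .
    qed
    moreover have "Q * (B * A) = (B * A) * Q"
    proof -
      have "Q * (B * A) = (Q * B) * A" using assoc_mult_mat[OF Q B A] by simp
      also have "\<dots> = B * (Q * A)" using cB assoc_mult_mat[OF B Q A] by simp
      also have "\<dots> = (B * A) * Q" using cA assoc_mult_mat[OF B A Q] by simp
      finally show ?thesis .
    qed
    ultimately show ?thesis by simp
  qed
  also have "\<dots> = (A * B - B * A) * Q"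
    using A B Q by (subst minus_mult_distrib_mat[where n=N and nr=N]) auto
  finally show ?case using A B unfolding commutes_def by auto
qed

definition gens :: "(pauli \<times> pauli) set \<Rightarrow> nat \<Rightarrow> pauli list set" where
  "gens G n = {two_site n A j B (j + 1) | A B j. (A, B) \<in> G \<and> j < n - 1}
                   \<union> {two_site n A (n - 1) B 0 | A B. (A, B) \<in> G}"

lemma circ_gens: "circ G n = Lie (gens G n)" by (simp add: circ_def gens_def)

lemma length_two_site[simp]: "length (two_site n A j B k) = n" by (simp add: two_site_def)

lemma gens_length: "P \<in> gens G n \<Longrightarrow> length P = n" by (auto simp: gens_def)

lemma smult_cancel_i: "\<i> \<cdot>\<^sub>m X = \<i> \<cdot>\<^sub>m Y \<Longrightarrow> X = (Y :: complex mat)"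
proof -
  assume "\<i> \<cdot>\<^sub>m X = \<i> \<cdot>\<^sub>m Y"
  then have "(-\<i>) \<cdot>\<^sub>m (\<i> \<cdot>\<^sub>m X) = (-\<i>) \<cdot>\<^sub>m (\<i> \<cdot>\<^sub>m Y)" by simp
  then show ?thesis by (simp add: smult_smult_mat one_smult_mat')
qed

lemma St_gens: "St n (circ G n) = {Q. length Q = n \<and> (\<forall>P\<in>gens G n. even (acount Q P))}"
proof (intro equalityI subsetI)
  fix Q assume "Q \<in> St n (circ G n)"
  then have len: "length Q = n" and c: "\<forall>A\<in>circ G n. pstring_mat Q * A = A * pstring_mat Q"
    by (auto simp: St_def pauli_strings_def)
  have "even (acount Q P)" if P: "P \<in> gens G n" for P
  proof -
    have lP: "length P = n" using gens_length[OF P] .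
    have "\<i> \<cdot>\<^sub>m pstring_mat P \<in> circ G n"
      unfolding circ_gens Lie_def using P by (auto intro: lie_gen.gen)
    then have "pstring_mat Q * (\<i> \<cdot>\<^sub>m pstring_mat P) = (\<i> \<cdot>\<^sub>m pstring_mat P) * pstring_mat Q"
      using c by auto
    then have "\<i> \<cdot>\<^sub>m (pstring_mat Q * pstring_mat P) = \<i> \<cdot>\<^sub>m (pstring_mat P * pstring_mat Q)"
      using pstring_carrier[of Q] pstring_carrier[of P] lP len
      by (simp add: mult_smult_distrib[where nr="2^n" and n="2^n" and nc="2^n"] mult_smult_assoc_mat[where nr="2^n" and n="2^n" and nc="2^n"])
    then have "commutes (pstring_mat Q) (pstring_mat P)"
      unfolding commutes_def by (rule smult_cancel_i)
    then show ?thesis using pstring_commutes_iff lP len by simp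
  qed
  then show "Q \<in> {Q. length Q = n \<and> (\<forall>P\<in>gens G n. even (acount Q P))}" using len by auto
next
  fix Q assume "Q \<in> {Q. length Q = n \<and> (\<forall>P\<in>gens G n. even (acount Q P))}"
  then have len: "length Q = n" and e: "\<forall>P\<in>gens G n. even (acount Q P)" by auto
  have Qc: "pstring_mat Q \<in> carrier_mat (2^n) (2^n)" using pstring_carrier[of Q] len by simp
  have S: "\<forall>A\<in>(\<lambda>P. \<i> \<cdot>\<^sub>m pstring_mat P) ` gens G n. A \<in> carrier_mat (2^n) (2^n) \<and> commutes (pstring_mat Q) A"
  proof
    fix A assume "A \<in> (\<lambda>P. \<i> \<cdot>\<^sub>m pstring_mat P) ` gens G n"
    then obtain P where P: "P \<in> gens G n" and A: "A = \<i> \<cdot>\<^sub>m pstring_mat P" by auto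
    have lP: "length P = n" using gens_length[OF P] .
    have Pc: "pstring_mat P \<in> carrier_mat (2^n) (2^n)" using pstring_carrier[of P] lP by simp
    have "commutes (pstring_mat Q) (pstring_mat P)" using pstring_commutes_iff[of Q P] lP len e P by simp
    then show "A \<in> carrier_mat (2^n) (2^n) \<and> commutes (pstring_mat Q) A"
      unfolding A commutes_def using Qc Pc by (simp add: mult_smult_distrib[OF Qc Pc] mult_smult_assoc_mat[OF Pc Qc])
  qed
  have "\<forall>A\<in>circ G n. pstring_mat Q * A = A * pstring_mat Q"
    unfolding circ_gens Lie_def using lie_commute[OF Qc S] by (auto simp: commutes_def)
  then show "Q \<in> St n (circ G n)" using len by (auto simp: St_def pauli_strings_def)
qed

lemma acount_sum: "length v = length w \<Longrightarrow> acount v w = (\<Sum>i<length v. if anti (v!i) (w!i) then 1 else 0)"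
proof (induction v arbitrary: w)
  case Nil then show ?case by simp
next
  case (Cons a v)
  then obtain b w' where w: "w = b # w'" and len: "length v = length w'" by (cases w) auto
  show ?case unfolding w length_Cons by (subst sum.lessThan_Suc_shift) (simp add: Cons.IH[OF len] del: anti.simps sum.lessThan_Suc)
qed

lemma two_site_nth: "i < n \<Longrightarrow> j \<noteq> k \<Longrightarrow> two_site n A j B k ! i = (if i = j \<and> j < n then A else if i = k \<and> k < n then B else PI)"
  by (auto simp: two_site_def nth_list_update)

lemma acount_two_site:
  assumes len: "length Q = n" and j: "j < n" and k: "k < n" and jk: "j \<noteq> k"
  shows "acount Q (two_site n A j B k) = (if anti (Q!j) A then 1 else 0) + (if anti (Q!k) B then 1 else 0)"
proof -
  have "acount Q (two_site n A j B k) = (\<Sum>i<n. if anti (Q!i) (two_site n A j B k ! i) then 1 else 0)"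
    using acount_sum[of Q "two_site n A j B k"] len by simp
  also have "\<dots> = (\<Sum>i<n. (if i = j then (if anti (Q!j) A then 1 else 0) else 0) + (if i = k then (if anti (Q!k) B then 1 else 0) else 0))"
    using j k jk by (intro sum.cong) (auto simp: two_site_nth)
  also have "\<dots> = (if anti (Q!j) A then 1 else 0) + (if anti (Q!k) B then 1 else 0)"
    using j k by (simp add: sum.distrib)
  finally show ?thesis .
qed

lemma even_two_site:
  assumes "length Q = n" "j < n" "k < n" "j \<noteq> k"
  shows "even (acount Q (two_site n A j B k)) \<longleftrightarrow> (anti (Q!j) A \<longleftrightarrow> anti (Q!k) B)"
  using acount_two_site[OF assms, of A B] by (auto simp del: anti.simps)

definition RG :: "(pauli \<times> pauli) set \<Rightarrow> pauli \<Rightarrow> pauli \<Rightarrow> bool" where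
  "RG G a b = (\<forall>(A,B)\<in>G. anti a A = anti b B)"

definition cycok :: "(pauli \<Rightarrow> pauli \<Rightarrow> bool) \<Rightarrow> pauli list \<Rightarrow> bool" where
  "cycok R Q = (\<forall>j<length Q. R (Q!j) (Q!(Suc j mod length Q)))"

lemma St_cyc:
  assumes n: "2 \<le> n"
  shows "St n (circ G n) = {Q. length Q = n \<and> cycok (RG G) Q}"
proof -
  have "(\<forall>P\<in>gens G n. even (acount Q P)) \<longleftrightarrow> cycok (RG G) Q" if len: "length Q = n" for Q
  proof -
    have "(\<forall>P\<in>gens G n. even (acount Q P)) \<longleftrightarrow>
      (\<forall>A B j. (A,B) \<in> G \<longrightarrow> j < n - 1 \<longrightarrow> (anti (Q!j) A \<longleftrightarrow> anti (Q!(j+1)) B)) \<and>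
      (\<forall>A B. (A,B) \<in> G \<longrightarrow> (anti (Q!(n-1)) A \<longleftrightarrow> anti (Q!0) B))"
    proof
      assume h: "\<forall>P\<in>gens G n. even (acount Q P)"
      show "(\<forall>A B j. (A,B) \<in> G \<longrightarrow> j < n - 1 \<longrightarrow> (anti (Q!j) A \<longleftrightarrow> anti (Q!(j+1)) B)) \<and>
      (\<forall>A B. (A,B) \<in> G \<longrightarrow> (anti (Q!(n-1)) A \<longleftrightarrow> anti (Q!0) B))"
      proof (intro conjI allI impI)
        fix A B j assume "(A,B) \<in> G" "j < n - 1"
        then have "two_site n A j B (j+1) \<in> gens G n" unfolding gens_def by blast
        then have "even (acount Q (two_site n A j B (j+1)))" using h by blast
        then show "anti (Q!j) A \<longleftrightarrow> anti (Q!(j+1)) B"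
          using even_two_site[OF len, of j "j+1" A B] \<open>j < n - 1\<close> by simp
      next
        fix A B assume "(A,B) \<in> G"
        then have "two_site n A (n-1) B 0 \<in> gens G n" unfolding gens_def by blast
        then have "even (acount Q (two_site n A (n-1) B 0))" using h by blast
        then show "anti (Q!(n-1)) A \<longleftrightarrow> anti (Q!0) B"
          using even_two_site[OF len, of "n-1" 0 A B] n by simp
      qed
    next
      assume h: "(\<forall>A B j. (A,B) \<in> G \<longrightarrow> j < n - 1 \<longrightarrow> (anti (Q!j) A \<longleftrightarrow> anti (Q!(j+1)) B)) \<and>
      (\<forall>A B. (A,B) \<in> G \<longrightarrow> (anti (Q!(n-1)) A \<longleftrightarrow> anti (Q!0) B))"
      show "\<forall>P\<in>gens G n. even (acount Q P)"
      proof
        fix P assume "P \<in> gens G n"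
        then consider (a) A B j where "(A,B) \<in> G" "j < n - 1" "P = two_site n A j B (j+1)"
          | (b) A B where "(A,B) \<in> G" "P = two_site n A (n-1) B 0"
          unfolding gens_def by blast
        then show "even (acount Q P)"
        proof cases
          case a then show ?thesis using h even_two_site[OF len, of j "j+1" A B] by (simp del: anti.simps)
        next
          case b then show ?thesis using h even_two_site[OF len, of "n-1" 0 A B] n by (simp del: anti.simps)
        qed
      qed
    qed
    also have "\<dots> \<longleftrightarrow> (\<forall>j<n. RG G (Q!j) (Q!(Suc j mod n)))"
    proof
      assume h: "(\<forall>A B j. (A,B) \<in> G \<longrightarrow> j < n - 1 \<longrightarrow> (anti (Q!j) A \<longleftrightarrow> anti (Q!(j+1)) B)) \<and>
      (\<forall>A B. (A,B) \<in> G \<longrightarrow> (anti (Q!(n-1)) A \<longleftrightarrow> anti (Q!0) B))"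
      show "\<forall>j<n. RG G (Q!j) (Q!(Suc j mod n))"
      proof (intro allI impI)
        fix j assume j: "j < n"
        show "RG G (Q!j) (Q!(Suc j mod n))"
        proof (cases "j < n - 1")
          case True
          then have "Suc j mod n = Suc j" by simp
          moreover have "RG G (Q!j) (Q!(j+1))" using h True unfolding RG_def by (auto simp del: anti.simps)
          ultimately show ?thesis by simp
        next
          case False
          then have "j = n - 1" using j by auto
          moreover then have "Suc j mod n = 0" using n by simp
          moreover have "RG G (Q!(n-1)) (Q!0)" using h unfolding RG_def by (auto simp del: anti.simps)
          ultimately show ?thesis by simp
        qed
      qed
    next
      assume h: "\<forall>j<n. RG G (Q!j) (Q!(Suc j mod n))"
      have h1: "RG G (Q!j) (Q!(j+1))" if "j < n - 1" for j
        using h[rule_format, of j] that by auto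
      have h2: "RG G (Q!(n-1)) (Q!0)"
        using h[rule_format, of "n-1"] n by auto
      show "(\<forall>A B j. (A,B) \<in> G \<longrightarrow> j < n - 1 \<longrightarrow> (anti (Q!j) A \<longleftrightarrow> anti (Q!(j+1)) B)) \<and>
      (\<forall>A B. (A,B) \<in> G \<longrightarrow> (anti (Q!(n-1)) A \<longleftrightarrow> anti (Q!0) B))"
        using h1 h2 unfolding RG_def by (auto simp del: anti.simps)
    qed
    finally show ?thesis unfolding cycok_def using len by simp
  qed
  then show ?thesis unfolding St_gens by auto
qed




lemma cycok_step: "cycok R Q \<Longrightarrow> Suc j < length Q \<Longrightarrow> R (Q!j) (Q!(Suc j))"
  unfolding cycok_def by (metis Suc_lessD mod_less)

lemma cycok_wrap: "cycok R Q \<Longrightarrow> 0 < length Q \<Longrightarrow> R (Q!(length Q - 1)) (Q!0)"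
proof -
  assume c: "cycok R Q" and n: "0 < length Q"
  have "length Q - 1 < length Q" "Suc (length Q - 1) mod length Q = 0" using n by auto
  then show ?thesis using c unfolding cycok_def by metis
qed

lemma cycokI: "(\<And>j. Suc j < length Q \<Longrightarrow> R (Q!j) (Q!(Suc j))) \<Longrightarrow> (0 < length Q \<Longrightarrow> R (Q!(length Q - 1)) (Q!0)) \<Longrightarrow> cycok R Q"
  unfolding cycok_def
proof (intro allI impI)
  fix j assume h1: "\<And>j. Suc j < length Q \<Longrightarrow> R (Q!j) (Q!(Suc j))" and h2: "0 < length Q \<Longrightarrow> R (Q!(length Q - 1)) (Q!0)"
    and j: "j < length Q"
  show "R (Q ! j) (Q ! (Suc j mod length Q))"
  proof (cases "Suc j < length Q")
    case True then show ?thesis using h1 by simp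
  next
    case False
    then have "Suc j = length Q" using j by auto
    then have "j = length Q - 1" "Suc j mod length Q = 0" by auto
    moreover have "R (Q!(length Q - 1)) (Q!0)" using h2 j by (metis gr_zeroI less_zeroE)
    ultimately show ?thesis by simp
  qed
qed

lemma Prep_length[simp]: "length (Prep n w) = n" by (simp add: Prep_def)
lemma Prep_nth: "j < n \<Longrightarrow> Prep n w ! j = w ! (j mod length w)" by (simp add: Prep_def)

lemma Prep_eqI: "length Q = n \<Longrightarrow> (\<And>j. j < n \<Longrightarrow> Q!j = w!(j mod length w)) \<Longrightarrow> Q = Prep n w"
  by (rule nth_equalityI) (auto simp: Prep_nth)

lemma rank_const:
  assumes rk: "\<And>a b. R a b \<Longrightarrow> a = b \<or> r b < (r a :: nat)"
    and c: "cycok R Q" and len: "length Q = n" and n: "0 < n"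
  shows "\<forall>j<n. Q!j = Q!0"
proof -
  have dec: "r (Q!(Suc j)) \<le> r (Q!j)" if "Suc j < n" for j
    using rk[OF cycok_step[OF c, of j]] that len by fastforce
  have mono: "r (Q!k) \<le> r (Q!j)" if "j \<le> k" "k < n" for j k
    using that
  proof (induction k)
    case 0 then show ?case by simp
  next
    case (Suc k)
    then show ?case using dec[of k] by (cases "j = Suc k") auto
  qed
  have w: "r (Q!0) \<le> r (Q!(n-1))"
    using rk[OF cycok_wrap[OF c]] len n by fastforce
  have eqr: "r (Q!j) = r (Q!0)" if "j < n" for j
    using mono[of 0 j] mono[of j "n-1"] w that n by fastforce
  show ?thesis
  proof (intro allI impI)
    fix j assume "j < n"
    then show "Q!j = Q!0"
    proof (induction j)
      case 0 then show ?case by simp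
    next
      case (Suc j)
      have "R (Q!j) (Q!(Suc j))" using cycok_step[OF c] Suc.prems len by simp
      then have "Q!j = Q!(Suc j)" using rk eqr[of j] eqr[of "Suc j"] Suc.prems by fastforce
      then show ?case using Suc by simp
    qed
  qed
qed

lemma rank_set:
  assumes rk: "\<And>a b. R a b \<Longrightarrow> a = b \<or> r b < (r a :: nat)" and n: "0 < n"
  shows "{Q. length Q = n \<and> cycok R Q} = (\<lambda>c. Prep n [c]) ` {c. R c c}"
proof (intro equalityI subsetI)
  fix Q assume "Q \<in> {Q. length Q = n \<and> cycok R Q}"
  then have len: "length Q = n" and c: "cycok R Q" by auto
  have all: "\<forall>j<n. Q!j = Q!0" using rank_const[OF rk c len n] .
  have "Q = Prep n [Q!0]" using len
  proof (intro Prep_eqI)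
    fix j assume "j < n" then have "Q!j = Q!0" using all by blast
    then show "Q!j = [Q!0] ! (j mod length [Q!0])" by simp
  qed
  moreover have "R (Q!0) (Q!0)"
  proof -
    have "n - 1 < n" using n by simp
    then have "Q!(n-1) = Q!0" using all by blast
    then show ?thesis using cycok_wrap[OF c] len n by simp
  qed
  ultimately show "Q \<in> (\<lambda>c. Prep n [c]) ` {c. R c c}" by auto
next
  fix Q assume "Q \<in> (\<lambda>c. Prep n [c]) ` {c. R c c}"
  then obtain c where Q: "Q = Prep n [c]" and Rc: "R c c" by auto
  show "Q \<in> {Q. length Q = n \<and> cycok R Q}"
    unfolding Q using Rc by (auto simp: cycok_def Prep_nth)
qed

lemma orbit_periodic:
  assumes f: "\<And>a b. R a b \<longleftrightarrow> b = f a"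
    and wp: "0 < length w" and wc: "\<And>i. i < length w \<Longrightarrow> w!(Suc i mod length w) = f (w!i)"
    and c: "cycok R Q" and len: "length Q = n" and n: "0 < n" and q0: "Q!0 = w!0"
  shows "\<forall>j<n. Q!j = w!(j mod length w)" and "w!(n mod length w) = w!0"
proof -
  let ?p = "length w"
  show all: "\<forall>j<n. Q!j = w!(j mod ?p)"
  proof (intro allI impI)
    fix j assume "j < n"
    then show "Q!j = w!(j mod ?p)"
    proof (induction j)
      case 0 then show ?case using q0 by simp
    next
      case (Suc j)
      have "Q!(Suc j) = f (Q!j)" using cycok_step[OF c] Suc.prems len f by simp
      also have "\<dots> = f (w!(j mod ?p))" using Suc by simp
      also have "\<dots> = w!(Suc (j mod ?p) mod ?p)" using wc[of "j mod ?p"] wp by simp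
      also have "Suc (j mod ?p) mod ?p = Suc j mod ?p" by (simp add: mod_Suc_eq)
      finally show ?case .
    qed
  qed
  have "Q!0 = f (Q!(n-1))" using cycok_wrap[OF c] len n f by simp
  also have "\<dots> = f (w!((n-1) mod ?p))" using all n by simp
  also have "\<dots> = w!(Suc ((n-1) mod ?p) mod ?p)" using wc[of "(n-1) mod ?p"] wp by simp
  also have "Suc ((n-1) mod ?p) mod ?p = n mod ?p" using n by (simp add: mod_Suc_eq)
  finally show "w!(n mod ?p) = w!0" using q0 by simp
qed

lemma Prep_cyc:
  assumes f: "\<And>a b. R a b \<longleftrightarrow> b = f a"
    and wp: "0 < length w" and wc: "\<And>i. i < length w \<Longrightarrow> w!(Suc i mod length w) = f (w!i)"
    and d: "length w dvd n"
  shows "cycok R (Prep n w)"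
  unfolding cycok_def
proof (intro allI impI)
  let ?p = "length w"
  fix j assume j: "j < length (Prep n w)"
  then have j': "j < n" by simp
  have "Prep n w ! (Suc j mod length (Prep n w)) = w!((Suc j mod n) mod ?p)"
    using j' by (simp add: Prep_nth)
  also have "(Suc j mod n) mod ?p = Suc j mod ?p" using d by (simp add: mod_mod_cancel)
  also have "\<dots> = Suc (j mod ?p) mod ?p" by (simp add: mod_Suc_eq)
  also have "w!\<dots> = f (w!(j mod ?p))" using wc[of "j mod ?p"] wp by simp
  finally show "R (Prep n w ! j) (Prep n w ! (Suc j mod length (Prep n w)))"
    using f j' by (simp add: Prep_nth)
qed

lemma orbit_set:
  assumes f: "\<And>a b. R a b \<longleftrightarrow> b = f a"
    and ws: "\<And>w. w \<in> set ws \<Longrightarrow> distinct w \<and> 0 < length w \<and> (\<forall>i < length w. w!(Suc i mod length w) = f (w!i))"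
    and cover: "\<And>c. \<exists>w\<in>set ws. w!0 = c"
    and n: "0 < n"
  shows "{Q. length Q = n \<and> cycok R Q} = (Prep n) ` set (filter (\<lambda>w. length w dvd n) ws)"
proof (intro equalityI subsetI)
  fix Q assume "Q \<in> {Q. length Q = n \<and> cycok R Q}"
  then have len: "length Q = n" and c: "cycok R Q" by auto
  obtain w where w: "w \<in> set ws" "w!0 = Q!0" using cover by blast
  have dw: "distinct w" and wp: "0 < length w" and wc: "\<And>i. i < length w \<Longrightarrow> w!(Suc i mod length w) = f (w!i)"
    using ws[OF w(1)] by auto
  note o = orbit_periodic[OF f wp wc c len n w(2)[symmetric]]
  have "n mod length w = 0"
    using o(2) dw wp by (simp add: nth_eq_iff_index_eq)
  moreover have "Q = Prep n w" using o(1) len by (intro Prep_eqI) auto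
  ultimately show "Q \<in> (Prep n) ` set (filter (\<lambda>w. length w dvd n) ws)"
    using w(1) by (auto simp: dvd_eq_mod_eq_0)
next
  fix Q assume "Q \<in> (Prep n) ` set (filter (\<lambda>w. length w dvd n) ws)"
  then obtain w where w: "w \<in> set ws" "length w dvd n" and Q: "Q = Prep n w" by auto
  show "Q \<in> {Q. length Q = n \<and> cycok R Q}"
    unfolding Q using Prep_cyc[OF f _ _ w(2)] ws[OF w(1)] by auto
qed




lemma pauli_collect: "{c. P c} = (if P PI then {PI} else {}) \<union> (if P PX then {PX} else {}) \<union> (if P PY then {PY} else {}) \<union> (if P PZ then {PZ} else {})"
  by (auto; case_tac x; auto)

lemma g_const:
  assumes R: "\<And>a b. R a b \<longleftrightarrow> g a = g b" and n: "0 < length Q"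
  shows "cycok R Q \<longleftrightarrow> (\<forall>j<length Q. g (Q!j) = g (Q!0))"
proof
  assume c: "cycok R Q"
  show "\<forall>j<length Q. g (Q!j) = g (Q!0)"
  proof (intro allI impI)
    fix j assume "j < length Q" then show "g (Q!j) = g (Q!0)"
    proof (induction j)
      case 0 then show ?case by simp
    next
      case (Suc j)
      have "R (Q!j) (Q!(Suc j))" using cycok_step[OF c] Suc.prems by blast
      then have "g (Q!(Suc j)) = g (Q!j)" using R by metis
      moreover have "g (Q!j) = g (Q!0)" using Suc by simp
      ultimately show ?case by simp
    qed
  qed
next
  assume h: "\<forall>j<length Q. g (Q!j) = g (Q!0)"
  show "cycok R Q" unfolding cycok_def R
  proof (intro allI impI)
    fix j assume j: "j < length Q"
    have "Suc j mod length Q < length Q" using n by simp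
    then have "g (Q!(Suc j mod length Q)) = g (Q!0)" using h by blast
    moreover have "g (Q!j) = g (Q!0)" using h j by blast
    ultimately show "g (Q!j) = g (Q!(Suc j mod length Q))" by simp
  qed
qed

lemma tensor_pow_nth: "Q \<in> tensor_pow T n \<longleftrightarrow> length Q = n \<and> (\<forall>j<n. Q!j \<in> T)"
  by (auto simp: tensor_pow_def in_set_conv_nth dest: nth_mem)

lemma a0_set: assumes n: "0 < n"
  shows "{Q. length Q = n \<and> cycok (RG a0) Q} = tensor_pow {PI, PX} n \<union> tensor_pow {PY, PZ} n"
proof -
  have R: "\<And>a b. RG a0 a b \<longleftrightarrow> (a \<in> {PI,PX}) = (b \<in> {PI,PX})"
    by (case_tac a; case_tac b; simp add: RG_def a0_def)
  have "(\<forall>j<n. (Q!j \<in> {PI,PX}) = (Q!0 \<in> {PI,PX})) \<longleftrightarrow> (\<forall>j<n. Q!j \<in> {PI,PX}) \<or> (\<forall>j<n. Q!j \<in> {PY,PZ})" for Q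
  proof -
    have "Q!j \<in> {PY,PZ} \<longleftrightarrow> Q!j \<notin> {PI,PX}" for j by (cases "Q!j") auto
    then show ?thesis using n by auto
  qed
  then show ?thesis using g_const[OF R] n by (auto simp: tensor_pow_nth)
qed

lemma b_set: assumes R: "\<And>a b. R a b \<longleftrightarrow> a \<in> {PI,PX} \<and> b \<in> {PI,PX}" and n: "0 < n"
  shows "{Q. length Q = n \<and> cycok R Q} = tensor_pow {PI, PX} n"
proof -
  have "cycok R Q \<longleftrightarrow> (\<forall>j<n. Q!j \<in> {PI,PX})" if len: "length Q = n" for Q
  proof
    assume "cycok R Q" then show "\<forall>j<n. Q!j \<in> {PI,PX}" unfolding cycok_def R len by blast
  next
    assume "\<forall>j<n. Q!j \<in> {PI,PX}" then show "cycok R Q" unfolding cycok_def R len using n by simp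
  qed
  then show ?thesis by (auto simp: tensor_pow_nth)
qed

lemma RG_simps: "RG {} a b = True" "RG (insert (A,B) G) a b = ((anti a A = anti b B) \<and> RG G a b)"
  by (auto simp: RG_def)

lemma Prep_image2: "(\<lambda>c. Prep n [c]) ` {PI} = {Prep n [PI]}" by simp




lemma St_rank_case:
  assumes n: "3 \<le> n" and rk: "\<And>a b. RG G a b \<Longrightarrow> a = b \<or> r b < (r a :: nat)"
  shows "St n (circ G n) = (\<lambda>c. Prep n [c]) ` {c. RG G c c}"
  using St_cyc[of n G] rank_set[OF rk, where n=n] n by simp

lemma St_orbit_case:
  assumes n: "3 \<le> n" and f: "\<And>a b. RG G a b \<longleftrightarrow> b = f a"
    and ws: "\<And>w. w \<in> set ws \<Longrightarrow> distinct w \<and> 0 < length w \<and> (\<forall>i < length w. w!(Suc i mod length w) = f (w!i))"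
    and cover: "\<And>c. \<exists>w\<in>set ws. w!0 = c"
  shows "St n (circ G n) = (Prep n) ` set (filter (\<lambda>w. length w dvd n) ws)"
  using St_cyc[of n G] orbit_set[OF f ws cover, where n=n] n by simp

lemma UNIV_pauli: "(UNIV :: pauli set) = {PI, PX, PY, PZ}"
  by (auto; case_tac x; auto)

lemma dvd2: "Suc (Suc 0) dvd n \<longleftrightarrow> even n"
proof -
  have "Suc (Suc 0) = 2" by simp
  then show ?thesis by (simp only:)
qed
lemma dvd3: "Suc (Suc (Suc 0)) dvd n \<longleftrightarrow> n mod 3 = 0"
proof -
  have "Suc (Suc (Suc 0)) = 3" by simp
  then show ?thesis by (simp only: dvd_eq_mod_eq_0)
qed

lemma all3: "(\<forall>i<3. P (i::nat)) \<longleftrightarrow> P 0 \<and> P 1 \<and> P 2"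
  unfolding numeral_3_eq_3 numeral_2_eq_2 by (auto simp: less_Suc_eq)
lemma all2: "(\<forall>i<2. P (i::nat)) \<longleftrightarrow> P 0 \<and> P 1"
  unfolding numeral_2_eq_2 by (auto simp: less_Suc_eq)

theorem mainTheorem9:
  fixes n :: nat
  assumes "3 \<le> n"
  shows
   "St n (circ a0 n) = tensor_pow {PI, PX} n \<union> tensor_pow {PY, PZ} n
  \<and> St n (circ a2 n) = (if even n
        then {Prep n [PI], Prep n [PX, PY], Prep n [PY, PX], Prep n [PZ]}
        else {Prep n [PI], Prep n [PZ]})
  \<and> St n (circ a3 n) = (if even n
        then {Prep n [PI], Prep n [PX], Prep n [PY, PZ], Prep n [PZ, PY]}
        else {Prep n [PI], Prep n [PX]})
  \<and> St n (circ a6 n) = St n (circ a3 n)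
  \<and> St n (circ a4 n) = {Prep n [PI], Prep n [PX], Prep n [PY], Prep n [PZ]}
  \<and> St n (circ a7 n) = St n (circ a4 n)
  \<and> St n (circ a5 n) = (if n mod 3 = 0
        then {Prep n [PI], Prep n [PX, PY, PZ], Prep n [PY, PZ, PX], Prep n [PZ, PX, PY]}
        else {Prep n [PI]})
  \<and> St n (circ a10 n) = St n (circ a5 n)
  \<and> St n (circ a8 n) = {Prep n [PI], Prep n [PY]}
  \<and> St n (circ a13 n) = {Prep n [PI], Prep n [PX]}
  \<and> St n (circ a20 n) = St n (circ a13 n)
  \<and> St n (circ a14 n) = {Prep n [PI], Prep n [PZ]}
  \<and> St n (circ b0 n) = tensor_pow {PI, PX} n
  \<and> St n (circ b1 n) = tensor_pow {PI, PX} n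
  \<and> (\<forall>G \<in> {a9, a11, a12, a15, a16, a17, a18, a19, a21, a22, b2, b3, b4}.
        St n (circ G n) = {Prep n [PI]})"
proof -
  note n = assms
  have n0: "0 < n" and n2: "2 \<le> n" using n by auto
  have A0: "St n (circ a0 n) = tensor_pow {PI, PX} n \<union> tensor_pow {PY, PZ} n"
    using St_cyc[OF n2] a0_set[OF n0] by simp
  have B0: "St n (circ b0 n) = tensor_pow {PI, PX} n"
  proof -
    have R: "\<And>a b. RG b0 a b \<longleftrightarrow> a \<in> {PI,PX} \<and> b \<in> {PI,PX}"
      by (case_tac a; case_tac b; simp add: RG_simps b0_def)
    show ?thesis using St_cyc[OF n2] b_set[OF R n0] by simp
  qed
  have B1: "St n (circ b1 n) = tensor_pow {PI, PX} n"
  proof -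
    have R: "\<And>a b. RG b1 a b \<longleftrightarrow> a \<in> {PI,PX} \<and> b \<in> {PI,PX}"
      by (case_tac a; case_tac b; simp add: RG_simps b1_def)
    show ?thesis using St_cyc[OF n2] b_set[OF R n0] by simp
  qed
  define fswapXY where "fswapXY = (\<lambda>p. case p of PX \<Rightarrow> PY | PY \<Rightarrow> PX | _ \<Rightarrow> p)"
  have A2: "St n (circ a2 n) = Prep n ` set (filter (\<lambda>w. length w dvd n) [[PI],[PX,PY],[PY,PX],[PZ]])"
    apply (rule St_orbit_case[OF n, where f=fswapXY])
    subgoal for a b by (cases a; cases b; simp add: RG_simps a2_def fswapXY_def)
    subgoal for w by (auto simp: fswapXY_def less_Suc_eq)
    subgoal for c by (cases c; auto)
    done
  have R_a9: "St n (circ a9 n) = (\<lambda>c. Prep n [c]) ` {c. RG a9 c c}"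
    apply (rule St_rank_case[OF n, where r="\<lambda>p. case p of PI \<Rightarrow> 0 | PX \<Rightarrow> 1 | _ \<Rightarrow> 2"])
    subgoal for a b by (cases a; cases b; simp add: RG_simps a9_def)
    done
  have R_a11: "St n (circ a11 n) = (\<lambda>c. Prep n [c]) ` {c. RG a11 c c}"
    apply (rule St_rank_case[OF n, where r="\<lambda>p. case p of PX \<Rightarrow> 2 | PY \<Rightarrow> 1 | _ \<Rightarrow> 0"])
    subgoal for a b by (cases a; cases b; simp add: RG_simps a11_def)
    done
  have R_a12: "St n (circ a12 n) = (\<lambda>c. Prep n [c]) ` {c. RG a12 c c}"
    apply (rule St_rank_case[OF n, where r="\<lambda>p. case p of PY \<Rightarrow> 1 | _ \<Rightarrow> 0"])
    subgoal for a b by (cases a; cases b; simp add: RG_simps a12_def)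
    done
  have R_a17: "St n (circ a17 n) = (\<lambda>c. Prep n [c]) ` {c. RG a17 c c}"
    apply (rule St_rank_case[OF n, where r="\<lambda>p. case p of PY \<Rightarrow> 1 | _ \<Rightarrow> 0"])
    subgoal for a b by (cases a; cases b; simp add: RG_simps a17_def)
    done
  have R_a19: "St n (circ a19 n) = (\<lambda>c. Prep n [c]) ` {c. RG a19 c c}"
    apply (rule St_rank_case[OF n, where r="\<lambda>p. case p of PY \<Rightarrow> 1 | _ \<Rightarrow> 0"])
    subgoal for a b by (cases a; cases b; simp add: RG_simps a19_def)
    done
  have R_a15: "St n (circ a15 n) = (\<lambda>c. Prep n [c]) ` {c. RG a15 c c}"
    apply (rule St_rank_case[OF n, where r="\<lambda>p. case p of PX \<Rightarrow> 1 | _ \<Rightarrow> 0"])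
    subgoal for a b by (cases a; cases b; simp add: RG_simps a15_def)
    done
  have R_b2: "St n (circ b2 n) = (\<lambda>c. Prep n [c]) ` {c. RG b2 c c}"
    apply (rule St_rank_case[OF n, where r="\<lambda>p. case p of PX \<Rightarrow> 1 | _ \<Rightarrow> 0"])
    subgoal for a b by (cases a; cases b; simp add: RG_simps b2_def)
    done
  have R_b4: "St n (circ b4 n) = (\<lambda>c. Prep n [c]) ` {c. RG b4 c c}"
    apply (rule St_rank_case[OF n, where r="\<lambda>p. case p of PX \<Rightarrow> 1 | _ \<Rightarrow> 0"])
    subgoal for a b by (cases a; cases b; simp add: RG_simps b4_def)
    done
  have R_a16: "St n (circ a16 n) = (\<lambda>c. Prep n [c]) ` {c. RG a16 c c}"
    apply (rule St_rank_case[OF n, where r="\<lambda>p. 0"])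
    subgoal for a b by (cases a; cases b; simp add: RG_simps a16_def)
    done
  have R_a18: "St n (circ a18 n) = (\<lambda>c. Prep n [c]) ` {c. RG a18 c c}"
    apply (rule St_rank_case[OF n, where r="\<lambda>p. 0"])
    subgoal for a b by (cases a; cases b; simp add: RG_simps a18_def)
    done
  have R_a21: "St n (circ a21 n) = (\<lambda>c. Prep n [c]) ` {c. RG a21 c c}"
    apply (rule St_rank_case[OF n, where r="\<lambda>p. 0"])
    subgoal for a b by (cases a; cases b; simp add: RG_simps a21_def)
    done
  have R_a22: "St n (circ a22 n) = (\<lambda>c. Prep n [c]) ` {c. RG a22 c c}"
    apply (rule St_rank_case[OF n, where r="\<lambda>p. 0"])
    subgoal for a b by (cases a; cases b; simp add: RG_simps a22_def)
    done
  have R_b3: "St n (circ b3 n) = (\<lambda>c. Prep n [c]) ` {c. RG b3 c c}"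
    apply (rule St_rank_case[OF n, where r="\<lambda>p. 0"])
    subgoal for a b by (cases a; cases b; simp add: RG_simps b3_def)
    done
  have R_a8: "St n (circ a8 n) = (\<lambda>c. Prep n [c]) ` {c. RG a8 c c}"
    apply (rule St_rank_case[OF n, where r="\<lambda>p. case p of PX \<Rightarrow> 1 | PZ \<Rightarrow> 1 | _ \<Rightarrow> 0"])
    subgoal for a b by (cases a; cases b; simp add: RG_simps a8_def)
    done
  have R_a13: "St n (circ a13 n) = (\<lambda>c. Prep n [c]) ` {c. RG a13 c c}"
    apply (rule St_rank_case[OF n, where r="\<lambda>p. 0"])
    subgoal for a b by (cases a; cases b; simp add: RG_simps a13_def)
    done
  have R_a20: "St n (circ a20 n) = (\<lambda>c. Prep n [c]) ` {c. RG a20 c c}"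
    apply (rule St_rank_case[OF n, where r="\<lambda>p. 0"])
    subgoal for a b by (cases a; cases b; simp add: RG_simps a20_def)
    done
  have R_a14: "St n (circ a14 n) = (\<lambda>c. Prep n [c]) ` {c. RG a14 c c}"
    apply (rule St_rank_case[OF n, where r="\<lambda>p. 0"])
    subgoal for a b by (cases a; cases b; simp add: RG_simps a14_def)
    done
  have R_a4: "St n (circ a4 n) = (\<lambda>c. Prep n [c]) ` {c. RG a4 c c}"
    apply (rule St_rank_case[OF n, where r="\<lambda>p. 0"])
    subgoal for a b by (cases a; cases b; simp add: RG_simps a4_def)
    done
  have R_a7: "St n (circ a7 n) = (\<lambda>c. Prep n [c]) ` {c. RG a7 c c}"
    apply (rule St_rank_case[OF n, where r="\<lambda>p. 0"])
    subgoal for a b by (cases a; cases b; simp add: RG_simps a7_def)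
    done
  define fswapYZ where "fswapYZ = (\<lambda>p. case p of PY \<Rightarrow> PZ | PZ \<Rightarrow> PY | _ \<Rightarrow> p)"
  define fcyc where "fcyc = (\<lambda>p. case p of PX \<Rightarrow> PY | PY \<Rightarrow> PZ | PZ \<Rightarrow> PX | _ \<Rightarrow> p)"
  have O_a3: "St n (circ a3 n) = Prep n ` set (filter (\<lambda>w. length w dvd n) [[PI],[PX],[PY,PZ],[PZ,PY]])"
    apply (rule St_orbit_case[OF n, where f=fswapYZ])
    subgoal for a b by (cases a; cases b; simp add: RG_simps a3_def fswapYZ_def)
    subgoal for w by (auto simp: fswapYZ_def less_Suc_eq)
    subgoal for c by (cases c; auto)
    done
  have O_a6: "St n (circ a6 n) = Prep n ` set (filter (\<lambda>w. length w dvd n) [[PI],[PX],[PY,PZ],[PZ,PY]])"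
    apply (rule St_orbit_case[OF n, where f=fswapYZ])
    subgoal for a b by (cases a; cases b; simp add: RG_simps a6_def fswapYZ_def)
    subgoal for w by (auto simp: fswapYZ_def less_Suc_eq)
    subgoal for c by (cases c; auto)
    done
  have O_a5: "St n (circ a5 n) = Prep n ` set (filter (\<lambda>w. length w dvd n) [[PI],[PX,PY,PZ],[PY,PZ,PX],[PZ,PX,PY]])"
    apply (rule St_orbit_case[OF n, where f=fcyc])
    subgoal for a b by (cases a; cases b; simp add: RG_simps a5_def fcyc_def)
    subgoal for w by (auto simp: fcyc_def less_Suc_eq)
    subgoal for c by (cases c; auto)
    done
  have O_a10: "St n (circ a10 n) = Prep n ` set (filter (\<lambda>w. length w dvd n) [[PI],[PX,PY,PZ],[PY,PZ,PX],[PZ,PX,PY]])"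
    apply (rule St_orbit_case[OF n, where f=fcyc])
    subgoal for a b by (cases a; cases b; simp add: RG_simps a10_def fcyc_def)
    subgoal for w by (auto simp: fcyc_def less_Suc_eq)
    subgoal for c by (cases c; auto)
    done
  have T_a9: "St n (circ a9 n) = {Prep n [PI]}"
    unfolding R_a9 by (simp add: pauli_collect RG_simps a9_def insert_commute)
  have T_a11: "St n (circ a11 n) = {Prep n [PI]}"
    unfolding R_a11 by (simp add: pauli_collect RG_simps a11_def insert_commute)
  have T_a12: "St n (circ a12 n) = {Prep n [PI]}"
    unfolding R_a12 by (simp add: pauli_collect RG_simps a12_def insert_commute)
  have T_a17: "St n (circ a17 n) = {Prep n [PI]}"
    unfolding R_a17 by (simp add: pauli_collect RG_simps a17_def insert_commute)
  have T_a19: "St n (circ a19 n) = {Prep n [PI]}"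
    unfolding R_a19 by (simp add: pauli_collect RG_simps a19_def insert_commute)
  have T_a15: "St n (circ a15 n) = {Prep n [PI]}"
    unfolding R_a15 by (simp add: pauli_collect RG_simps a15_def insert_commute)
  have T_b2: "St n (circ b2 n) = {Prep n [PI]}"
    unfolding R_b2 by (simp add: pauli_collect RG_simps b2_def insert_commute)
  have T_b4: "St n (circ b4 n) = {Prep n [PI]}"
    unfolding R_b4 by (simp add: pauli_collect RG_simps b4_def insert_commute)
  have T_a16: "St n (circ a16 n) = {Prep n [PI]}"
    unfolding R_a16 by (simp add: pauli_collect RG_simps a16_def insert_commute)
  have T_a18: "St n (circ a18 n) = {Prep n [PI]}"
    unfolding R_a18 by (simp add: pauli_collect RG_simps a18_def insert_commute)
  have T_a21: "St n (circ a21 n) = {Prep n [PI]}"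
    unfolding R_a21 by (simp add: pauli_collect RG_simps a21_def insert_commute)
  have T_a22: "St n (circ a22 n) = {Prep n [PI]}"
    unfolding R_a22 by (simp add: pauli_collect RG_simps a22_def insert_commute)
  have T_b3: "St n (circ b3 n) = {Prep n [PI]}"
    unfolding R_b3 by (simp add: pauli_collect RG_simps b3_def insert_commute)
  have T_a8: "St n (circ a8 n) = {Prep n [PI], Prep n [PY]}"
    unfolding R_a8 by (simp add: pauli_collect RG_simps a8_def insert_commute)
  have T_a13: "St n (circ a13 n) = {Prep n [PI], Prep n [PX]}"
    unfolding R_a13 by (simp add: pauli_collect RG_simps a13_def insert_commute)
  have T_a20: "St n (circ a20 n) = {Prep n [PI], Prep n [PX]}"
    unfolding R_a20 by (simp add: pauli_collect RG_simps a20_def insert_commute)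
  have T_a14: "St n (circ a14 n) = {Prep n [PI], Prep n [PZ]}"
    unfolding R_a14 by (simp add: pauli_collect RG_simps a14_def insert_commute)
  have T_a4: "St n (circ a4 n) = {Prep n [PI], Prep n [PX], Prep n [PY], Prep n [PZ]}"
    unfolding R_a4 by (simp add: pauli_collect RG_simps a4_def insert_commute UNIV_pauli)
  have T_a7: "St n (circ a7 n) = {Prep n [PI], Prep n [PX], Prep n [PY], Prep n [PZ]}"
    unfolding R_a7 by (simp add: pauli_collect RG_simps a7_def insert_commute UNIV_pauli)
  have T_a2: "St n (circ a2 n) = (if even n
        then {Prep n [PI], Prep n [PX, PY], Prep n [PY, PX], Prep n [PZ]}
        else {Prep n [PI], Prep n [PZ]})"
    unfolding A2 by (simp add: dvd2)
  have T_a3: "St n (circ a3 n) = (if even n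
        then {Prep n [PI], Prep n [PX], Prep n [PY, PZ], Prep n [PZ, PY]}
        else {Prep n [PI], Prep n [PX]})"
    unfolding O_a3 by (simp add: dvd2)
  have T_a6: "St n (circ a6 n) = St n (circ a3 n)"
    unfolding O_a3 O_a6 by simp
  have T_a5: "St n (circ a5 n) = (if n mod 3 = 0
        then {Prep n [PI], Prep n [PX, PY, PZ], Prep n [PY, PZ, PX], Prep n [PZ, PX, PY]}
        else {Prep n [PI]})"
    unfolding O_a5 by (simp add: dvd3)
  have T_a10: "St n (circ a10 n) = St n (circ a5 n)"
    unfolding O_a5 O_a10 by simp
  show ?thesis
    using A0 B0 B1 T_a2 T_a3 T_a6 T_a5 T_a10 T_a9 T_a11 T_a12 T_a17 T_a19 T_a15 T_b2 T_b4 T_a16 T_a18 T_a21 T_a22 T_b3 T_a8 T_a13 T_a20 T_a14 T_a4 T_a7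
    by simp
qed


end
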